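(* Let $A_k>0$, $B_k>0$, $0<\alpha_k\le1$, let $e_k(n)=\frac{A_k}{n^{\alpha_k}+B_k}$, and for ${\bm{q}}\in\Delta_K$ and $N\ge1$ let $\bar e_k({\bm{q}})=\mathbb{E}_{n_k\sim\mathrm{Binom}(N,q_k)}[e_k(n_k)]$ and $f_k({\bm{q}})=\frac{A_k}{(q_kN)^{\alpha_k}+B_k}$. Then, when $Nq_k$ is large enough (i.e. $Nq_k\ge M$ for some threshold $M$ depending only on $A_k,B_k,\alpha_k$), $$|f_k({\bm{q}})-\bar e_k({\bm{q}})|\le\frac{320A_k}{B_k}\cdot\frac{1}{(Nq_k)^2}+\frac{\alpha_kA_k}{(Nq_k)^{\alpha_k+\frac14}}+\frac{\alpha_kA_k}{(Nq_k)^{\alpha_k+\frac12}}.$$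
   Context: $\Delta_K=\{{\bm{r}}\in\mathbb{R}^K:{\bm{r}}\ge0,\ \sum_kr_k=1\}$. $\bar e_k({\bm{q}})$ is the expected error on component $k$ of the power-law model when trained on $N$ i.i.d. samples from the mixture with proportions ${\bm{q}}$ (the count $n_k$ from component $k$ is $\mathrm{Binom}(N,q_k)$); $f_k$ is the "approximate subpopulation error function". *)

theory Defs
  imports "HOL-Probability.Probability"
begin

definition prob_simplex :: "nat \<Rightarrow> (nat \<Rightarrow> real) set" where
  "prob_simplex K = {r. (\<forall>k<K. 0 \<le> r k) \<and> (\<Sum>k<K. r k) = 1}"

text \<open>Power-law error as a function of the number of samples n (n^alpha with 0^alpha = 0).\<close>
definition pl_err :: "real \<Rightarrow> real \<Rightarrow> real \<Rightarrow> real \<Rightarrow> real" where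
  "pl_err A B \<alpha> x = A / (x powr \<alpha> + B)"

definition exp_err :: "real \<Rightarrow> real \<Rightarrow> real \<Rightarrow> nat \<Rightarrow> real \<Rightarrow> real" where
  "exp_err A B \<alpha> N p = measure_pmf.expectation (binomial_pmf N p) (\<lambda>n. pl_err A B \<alpha> (real n))"

definition approx_err :: "real \<Rightarrow> real \<Rightarrow> real \<Rightarrow> nat \<Rightarrow> real \<Rightarrow> real" where
  "approx_err A B \<alpha> N p = pl_err A B \<alpha> (p * real N)"

end

theory Submission
  imports Defs
begin

lemma powr_tangent:
  fixes m x \<alpha> :: real
  assumes m: "0 < m" and x: "0 \<le> x" and a: "0 < \<alpha>" "\<alpha> \<le> 1"
  shows "x powr \<alpha> \<le> m powr \<alpha> + \<alpha> * m powr (\<alpha> - 1) * (x - m)"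
proof -
  have mm: "m powr (\<alpha> - 1) * m = m powr \<alpha>"
    using m by (simp add: powr_diff)
  show ?thesis
  proof (cases "x = 0")
    case True
    have "0 \<le> (1 - \<alpha>) * m powr \<alpha>" using a by simp
    also have "\<dots> = m powr \<alpha> + \<alpha> * m powr (\<alpha> - 1) * (x - m)"
      using True mm by (simp add: algebra_simps)
    finally show ?thesis using True a by simp
  next
    case False
    hence xp: "x > 0" using x by simp
    have Y: "x powr \<alpha> * m powr (1 - \<alpha>) \<le> \<alpha> * x + (1 - \<alpha>) * m"
      using Youngs_inequality_0[of \<alpha> "1 - \<alpha>" x m] a xp m by simp
    have "x powr \<alpha> = (x powr \<alpha> * m powr (1 - \<alpha>)) * m powr (\<alpha> - 1)"
      using m by (simp add: powr_add[symmetric])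
    also have "\<dots> \<le> (\<alpha> * x + (1 - \<alpha>) * m) * m powr (\<alpha> - 1)"
      using Y by (intro mult_right_mono) auto
    also have "\<dots> = m powr \<alpha> + \<alpha> * m powr (\<alpha> - 1) * (x - m)"
      using mm by (simp add: algebra_simps)
    finally show ?thesis .
  qed
qed

lemma g_tangent:
  fixes A B m x \<alpha> :: real
  assumes A: "A > 0" and B: "B > 0" and m: "0 < m" and x: "0 \<le> x" and a: "0 < \<alpha>" "\<alpha> \<le> 1"
  shows "A / (m powr \<alpha> + B) - A * \<alpha> * m powr (\<alpha> - 1) / (m powr \<alpha> + B)^2 * (x - m)
          \<le> A / (x powr \<alpha> + B)"
proof -
  define u where "u = x powr \<alpha>"
  define v where "v = m powr \<alpha>"
  define c where "c = m powr (\<alpha> - 1)"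
  define D where "D = \<alpha> * c * (x - m)"
  have uD: "u \<le> v + D" using powr_tangent[OF m x a] unfolding u_def v_def D_def c_def .
  have u0: "u \<ge> 0" and v0: "v \<ge> 0" unfolding u_def v_def by auto
  have "D * (u + B) \<ge> (u - v) * (u + B)"
    using uD u0 B by (intro mult_right_mono) auto
  moreover have "(v - u) * (v + B) + (u - v) * (u + B) = (u - v)^2"
    by (simp add: algebra_simps power2_eq_square)
  moreover have "0 \<le> (u - v)^2" by simp
  ultimately have key: "(v - u) * (v + B) + D * (u + B) \<ge> 0" by linarith
  have eq0: "A / (u + B) - (A / (v + B) - A * D / (v + B)^2)
      = A * ((v - u) * (v + B) + D * (u + B)) / ((u + B) * (v + B)^2)"
    using u0 v0 B by (simp add: divide_simps power2_eq_square) (simp add: algebra_simps)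
  have nn: "0 \<le> A * ((v - u) * (v + B) + D * (u + B)) / ((u + B) * (v + B)^2)"
    using key A u0 v0 B by (intro divide_nonneg_nonneg mult_nonneg_nonneg) auto
  have fin: "A / (v + B) - A * D / (v + B)^2 \<le> A / (u + B)" using eq0 nn by linarith
  have fin2: "A / (m powr \<alpha> + B) - A * D / (m powr \<alpha> + B)^2 \<le> A / (x powr \<alpha> + B)"
    using fin unfolding u_def v_def .
  have eq1: "A * D / (m powr \<alpha> + B)^2 = A * \<alpha> * m powr (\<alpha> - 1) / (m powr \<alpha> + B)^2 * (x - m)"
    unfolding D_def c_def by (simp add: mult_ac)
  show ?thesis using fin2 unfolding eq1 .
qed

lemma exp_neg_bound:
  fixes l :: real assumes "0 \<le> l"
  shows "exp (-l) - 1 \<le> -l + l^2/2"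
proof -
  define P where "P = 1 + l + l^2/2"
  have P: "P \<le> exp l" unfolding P_def using exp_lower_Taylor_quadratic assms by blast
  have Pp: "P > 0" unfolding P_def using assms by (simp add: add_pos_nonneg)
  have "exp (-l) \<le> 1 / P" using P Pp by (simp add: exp_minus divide_simps)
  moreover have "1 / P \<le> 1 - l + l^2/2"
  proof -
    have "P * (1 - l + l^2/2) = 1 + l^4/4" unfolding P_def by (simp add: algebra_simps power2_eq_square power4_eq_xxxx field_simps)
    hence "1 \<le> P * (1 - l + l^2/2)" by simp
    thus ?thesis using Pp by (simp add: divide_simps mult.commute)
  qed
  ultimately show ?thesis by linarith
qed

lemma bm_aux:
  fixes a b c d p q :: real
  assumes h: "a * b = c * d"
  shows "(b * p ^ Suc k * q ^ n) * a = c * p * (d * p ^ k * q ^ n)"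
proof -
  have "(b * p ^ Suc k * q ^ n) * a = (a * b) * (p * (p ^ k * q ^ n))" by (simp add: mult_ac)
  also have "\<dots> = (c * d) * (p * (p ^ k * q ^ n))" by (simp only: h)
  also have "\<dots> = c * p * (d * p ^ k * q ^ n)" by (simp add: mult_ac)
  finally show ?thesis .
qed

lemma binomial_mean_sum:
  fixes p :: real
  shows "(\<Sum>k\<le>n. (real (n choose k) * p ^ k * (1 - p) ^ (n - k)) * real k) = real n * p"
proof (cases n)
  case 0 then show ?thesis by simp
next
  case (Suc j)
  have "(\<Sum>k\<le>Suc j. (real (Suc j choose k) * p ^ k * (1 - p) ^ (Suc j - k)) * real k)
      = (\<Sum>k\<le>j. (real (Suc j choose Suc k) * p ^ Suc k * (1 - p) ^ (Suc j - Suc k)) * real (Suc k))"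
    by (subst sum.atMost_Suc_shift) simp
  also have "\<dots> = (\<Sum>k\<le>j. real (Suc j) * p * (real (j choose k) * p ^ k * (1 - p) ^ (j - k)))"
  proof (rule sum.cong[OF refl])
    fix k assume "k \<in> {..j}"
    have h: "real (Suc k) * real (Suc j choose Suc k) = real (Suc j) * real (j choose k)"
      using Suc_times_binomial[of k j] by (metis of_nat_mult)
    show "(real (Suc j choose Suc k) * p ^ Suc k * (1 - p) ^ (Suc j - Suc k)) * real (Suc k)
         = real (Suc j) * p * (real (j choose k) * p ^ k * (1 - p) ^ (j - k))"
      unfolding diff_Suc_Suc by (rule bm_aux[OF h])
  qed
  also have "\<dots> = real (Suc j) * p * (\<Sum>k\<le>j. real (j choose k) * p ^ k * (1 - p) ^ (j - k))"
    by (rule sum_distrib_left[symmetric])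
  also have "(\<Sum>k\<le>j. real (j choose k) * p ^ k * (1 - p) ^ (j - k)) = (p + (1 - p)) ^ j"
    by (rule binomial_ring[symmetric])
  finally show ?thesis using Suc by simp
qed

lemma binomial_mean:
  assumes p: "p \<in> {0..1}"
  shows "measure_pmf.expectation (binomial_pmf n p) real = real n * p"
proof -
  have "measure_pmf.expectation (binomial_pmf n p) real =
     (\<Sum>k\<le>n. (real (n choose k) * p ^ k * (1 - p) ^ (n - k)) * real k)"
    using expectation_binomial_pmf'[OF p, of n real] by simp
  also have "\<dots> = real n * p" by (rule binomial_mean_sum)
  finally show ?thesis .
qed

lemma binomial_mgf:
  assumes p: "p \<in> {0..1}"
  shows "measure_pmf.expectation (binomial_pmf n p) (\<lambda>k. exp (- l * real k)) = (p * exp (-l) + (1 - p)) ^ n"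
proof -
  have "measure_pmf.expectation (binomial_pmf n p) (\<lambda>k. exp (- l * real k)) =
     (\<Sum>k\<le>n. (real (n choose k) * p ^ k * (1 - p) ^ (n - k)) * exp (- l * real k))"
    using expectation_binomial_pmf'[OF p, of n "\<lambda>k. exp (- l * real k)"] by simp
  also have "\<dots> = (\<Sum>k\<le>n. real (n choose k) * (p * exp (-l)) ^ k * (1 - p) ^ (n - k))"
  proof (rule sum.cong[OF refl])
    fix k
    have "exp (- l * real k) = exp (-l) ^ k" by (metis exp_of_nat_mult mult.commute)
    thus "(real (n choose k) * p ^ k * (1 - p) ^ (n - k)) * exp (- l * real k) =
      real (n choose k) * (p * exp (-l)) ^ k * (1 - p) ^ (n - k)"
      by (simp add: power_mult_distrib)
  qed
  also have "\<dots> = (p * exp (-l) + (1 - p)) ^ n" by (simp add: binomial_ring)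
  finally show ?thesis .
qed


lemma main_est:
  fixes A B \<alpha> m r t :: real
  assumes AB: "A > 0" "B > 0" "0 < \<alpha>" "\<alpha> \<le> 1"
    and r_def: "r = m powr (1/4)" and r4: "r^4 = m" and r1: "r \<ge> 1" and t_def: "t = r^3/2"
  shows "A / ((m - t) powr \<alpha> + B) - A / (m powr \<alpha> + B) \<le> \<alpha> * A / m powr (\<alpha> + 1/4)"
proof -
  have mp: "m > 0" using r4 r1 by (metis one_le_power order_less_le_trans zero_less_one)
  have r43: "r^3 \<le> r^4" using r1 by (simp add: power_increasing)
  have mt: "m - t \<ge> m / 2" unfolding t_def r4[symmetric] using r43 by simp
  have t0: "t > 0" unfolding t_def using r1 by simp
  have mt0: "m - t > 0" using mt mp by simp
  define a where "a = (m - t) powr \<alpha>"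
  define b where "b = m powr \<alpha>"
  have a0: "a > 0" unfolding a_def using mt0 by simp
  have b0: "b > 0" unfolding b_def using mp by simp
  have ab: "a \<le> b" unfolding a_def b_def using mt0 t0 AB by (intro powr_mono2) auto
  have "b \<le> a + \<alpha> * (m - t) powr (\<alpha> - 1) * (m - (m - t))"
    using powr_tangent[OF mt0 _ AB(3,4), of m] mp unfolding a_def b_def by simp
  moreover have "(m - t) powr (\<alpha> - 1) = a / (m - t)" unfolding a_def
    using mt0 by (simp add: powr_diff)
  ultimately have ba: "b - a \<le> \<alpha> * a * (t / (m - t))" by simp
  have "t / (m - t) \<le> t / (m / 2)" using mt t0 mt0 by (intro divide_left_mono) auto
  also have "t / (m / 2) = 1 / r" unfolding t_def r4[symmetric] using r1 by (simp add: field_simps power_numeral_reduce)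
  finally have tr: "t / (m - t) \<le> 1 / r" .
  have "\<alpha> * a * (t / (m - t)) \<le> \<alpha> * a * (1 / r)" using AB a0 tr by (intro mult_left_mono) auto
  with ba have ba2: "b - a \<le> \<alpha> * a / r" by simp
  have e1: "A / (a + B) - A / (b + B) = A * (b - a) / ((a + B) * (b + B))"
    using a0 b0 AB by (simp add: field_simps)
  have d1: "a * b \<le> (a + B) * (b + B)" using a0 b0 AB
    by (intro mult_mono) auto
  have n0: "0 \<le> A * (b - a)" using AB ab by simp
  have "A * (b - a) / ((a + B) * (b + B)) \<le> A * (b - a) / (a * b)"
    using d1 n0 a0 b0 AB by (intro divide_left_mono) (auto intro!: mult_pos_pos)
  also have "A * (b - a) \<le> A * (\<alpha> * a / r)" using ba2 AB by (intro mult_left_mono) auto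
  hence "A * (b - a) / (a * b) \<le> A * (\<alpha> * a / r) / (a * b)"
    using a0 b0 by (intro divide_right_mono) auto
  also have "A * (\<alpha> * a / r) / (a * b) = \<alpha> * A / (b * r)" using a0 b0 r1 by (simp add: field_simps)
  also have "\<dots> = \<alpha> * A / m powr (\<alpha> + 1/4)"
    unfolding b_def r_def by (simp add: powr_add)
  finally show ?thesis using e1 unfolding a_def b_def by simp
qed

lemma tail_est:
  fixes p m r t l :: real and N :: nat
  assumes pI: "p \<in> {0..1}" and m_def: "m = real N * p" and r1: "r \<ge> 1" and r4: "r^4 = m"
    and mM': "m \<ge> 320000^2" and t_def: "t = r^3 / 2" and l_def: "l = 1 / (2 * r)"
  shows "exp (l * (m - t)) * (p * exp (-l) + (1 - p)) ^ N \<le> 320 / m^2"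
proof -
  have mp: "m > 0" using mM' by simp
  have l0: "l \<ge> 0" unfolding l_def using r1 by simp
  have base0: "0 \<le> p * exp (-l) + (1 - p)" using pI by (simp add: add_nonneg_nonneg)
  have base1: "p * exp (-l) + (1 - p) \<le> exp (p * (exp (-l) - 1))"
    using exp_ge_add_one_self[of "p * (exp (-l) - 1)"] by (simp add: algebra_simps)
  have "(p * exp (-l) + (1 - p)) ^ N \<le> exp (p * (exp (-l) - 1)) ^ N"
    using base0 base1 by (intro power_mono) auto
  also have "exp (p * (exp (-l) - 1)) ^ N = exp (real N * (p * (exp (-l) - 1)))"
    by (rule exp_of_nat_mult[symmetric])
  also have "real N * (p * (exp (-l) - 1)) = m * (exp (-l) - 1)" unfolding m_def by simp
  finally have pw: "(p * exp (-l) + (1 - p)) ^ N \<le> exp (m * (exp (-l) - 1))" .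
  have ex: "m * (exp (-l) - 1) \<le> m * (-l + l^2/2)"
    using exp_neg_bound[OF l0] mp by (intro mult_left_mono) auto
  have ident: "l * (m - t) + m * (-l + l^2/2) = - (r^2 / 8)"
    unfolding l_def t_def r4[symmetric] using r1
    by (simp add: field_simps power2_eq_square power_numeral_reduce)
  have "exp (l * (m - t)) * (p * exp (-l) + (1 - p)) ^ N \<le> exp (l * (m - t)) * exp (m * (exp (-l) - 1))"
    using pw by (intro mult_left_mono) auto
  also have "\<dots> = exp (l * (m - t) + m * (exp (-l) - 1))" by (rule mult_exp_exp)
  also have "\<dots> \<le> exp (- (r^2 / 8))" using ex ident by simp
  also have "\<dots> \<le> 320 / m^2"
  proof -
    have rr: "r^2 \<ge> 320000"
    proof (rule ccontr)
      assume "\<not> r^2 \<ge> 320000"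
      hence "(r^2)^2 < 320000^2" using r1 by (intro power_strict_mono) auto
      hence "r^4 < 320000^2" by (simp add: power_mult[symmetric])
      thus False using mM' r4 by simp
    qed
    have "exp (r^2/8) = exp (real 5 * (r^2/40))" by simp
    also have "\<dots> = exp (r^2/40) ^ 5" by (rule exp_of_nat_mult)
    finally have e0: "exp (r^2/8) = exp (r^2/40) ^ 5" .
    have x1: "r^2/40 \<le> exp (r^2/40)" using exp_ge_add_one_self[of "r^2/40"] by linarith
    have "(r^2/40) ^ 5 \<le> exp (r^2/40) ^ 5"
      using x1 by (intro power_mono) auto
    with e0 have e1: "(r^2/40)^5 \<le> exp (r^2/8)" by simp
    have "m^2 = r^8" unfolding r4[symmetric] by (simp add: power_mult[symmetric])
    also have "r^8 \<le> 320 * (r^2/40)^5"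
    proof -
      have "r^8 * 40^5 \<le> r^8 * (320 * r^2)" using rr r1 by (intro mult_left_mono) auto
      moreover have "320 * (r^2/40)^5 = r^8 * (320 * r^2) / 40^5"
        by (simp add: power_divide power_mult[symmetric] power_add[symmetric] field_simps)
      ultimately show ?thesis by simp
    qed
    also have "\<dots> \<le> 320 * exp (r^2/8)" using e1 by simp
    finally have "m^2 \<le> 320 * exp (r^2/8)" .
    thus ?thesis using mp by (simp add: exp_minus field_simps)
  qed
  finally show ?thesis .
qed

lemma combine:
  fixes gm E g1 T X Y Z :: real
  shows "gm \<le> E \<Longrightarrow> E \<le> g1 + T \<Longrightarrow> g1 - gm \<le> X \<Longrightarrow> T \<le> Y \<Longrightarrow> 0 \<le> Z
    \<Longrightarrow> \<bar>gm - E\<bar> \<le> Y + X + Z"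
  by linarith

lemma g_mono:
  fixes A B \<alpha> x y :: real
  assumes "A > 0" "B > 0" "0 < \<alpha>" "0 \<le> x" "x \<le> y"
  shows "A / (y powr \<alpha> + B) \<le> A / (x powr \<alpha> + B)"
proof -
  have "x powr \<alpha> \<le> y powr \<alpha>" using assms by (intro powr_mono2) auto
  moreover have "0 < x powr \<alpha> + B" using assms by (simp add: add_nonneg_pos)
  ultimately show ?thesis using assms by (intro frac_le) auto
qed

lemma g_le:
  fixes A B \<alpha> x :: real
  assumes "A > 0" "B > 0"
  shows "A / (x powr \<alpha> + B) \<le> A / B" "0 \<le> A / (x powr \<alpha> + B)"
  using assms by (auto intro!: frac_le add_nonneg_pos)

theorem propositionA2:
  fixes A B \<alpha> :: real
  assumes "A > 0" and "B > 0" and "0 < \<alpha>" and "\<alpha> \<le> 1"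
  shows "\<exists>M. \<forall>(K::nat) (N::nat) (q::nat \<Rightarrow> real) (k::nat).
           q \<in> prob_simplex K \<longrightarrow> k < K \<longrightarrow> N \<ge> 1 \<longrightarrow> real N * q k \<ge> M \<longrightarrow>
           \<bar>approx_err A B \<alpha> N (q k) - exp_err A B \<alpha> N (q k)\<bar>
             \<le> 320 * A / B * (1 / (real N * q k) ^ 2)
               + \<alpha> * A / (real N * q k) powr (\<alpha> + 1/4)
               + \<alpha> * A / (real N * q k) powr (\<alpha> + 1/2)"
proof -
  note AB = assms
  define M :: real where "M = 320000^2"
  show ?thesis
  proof (rule exI[of _ M], intro allI impI)
    fix K N :: nat and q :: "nat \<Rightarrow> real" and k :: nat
    assume qs: "q \<in> prob_simplex K" and kK: "k < K" and N1: "N \<ge> 1" and mM: "real N * q k \<ge> M"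
    define p where "p = q k"
    define m where "m = real N * p"
    have mM': "m \<ge> M" using mM unfolding m_def p_def .
    have m1: "m \<ge> 1" using mM' unfolding M_def by simp
    have p0: "p \<ge> 0" using qs kK unfolding prob_simplex_def p_def by auto
    have "p \<le> (\<Sum>i<K. q i)" unfolding p_def
      using qs kK unfolding prob_simplex_def by (intro member_le_sum) auto
    hence p1: "p \<le> 1" using qs unfolding prob_simplex_def by simp
    have pI: "p \<in> {0..1}" using p0 p1 by simp
    have mp: "m > 0" using m1 by simp
    define g where "g x = A / (x powr \<alpha> + B)" for x
    define E where "E = measure_pmf.expectation (binomial_pmf N p) (\<lambda>n. g (real n))"
    have Edef: "exp_err A B \<alpha> N p = E" unfolding exp_err_def pl_err_def g_def E_def ..
    have Fdef: "approx_err A B \<alpha> N p = g m" unfolding approx_err_def pl_err_def g_def m_def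
      by (simp add: mult.commute)
    define c where "c = A * \<alpha> * m powr (\<alpha> - 1) / (m powr \<alpha> + B)^2"
    have low: "g m \<le> E"
    proof -
      have "measure_pmf.expectation (binomial_pmf N p) (\<lambda>n. (g m + c * m) - c * real n) \<le> E"
        unfolding E_def
      proof (rule integral_mono)
        show "integrable (measure_pmf (binomial_pmf N p)) (\<lambda>n. g m + c * m - c * real n)"
          using pI by simp
        show "integrable (measure_pmf (binomial_pmf N p)) (\<lambda>n. g (real n))"
          using pI by simp
        fix n :: nat
        have gt: "g m - c * (real n - m) \<le> g (real n)"
          using g_tangent[OF AB(1,2) mp _ AB(3,4), of "real n"] unfolding g_def c_def by simp
        have "g m + c * m - c * real n = g m - c * (real n - m)" by (simp add: algebra_simps)
        then show "g m + c * m - c * real n \<le> g (real n)" using gt by linarith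
      qed
      also have "measure_pmf.expectation (binomial_pmf N p) (\<lambda>n. (g m + c * m) - c * real n)
          = (g m + c * m) - c * measure_pmf.expectation (binomial_pmf N p) real"
        using pI by (simp add: Bochner_Integration.integral_diff)
      also have "\<dots> = g m" using binomial_mean[OF pI, of N] unfolding m_def by simp
      finally show ?thesis by simp
    qed
    define r where "r = m powr (1/4)"
    have r4: "r ^ 4 = m" unfolding r_def using mp by (simp add: powr_power)
    have r1: "r \<ge> 1" unfolding r_def using m1 by (simp add: ge_one_powr_ge_zero)
    define t where "t = r^3 / 2"
    define l where "l = 1 / (2 * r)"
    have l0: "l \<ge> 0" unfolding l_def using r1 by simp
    have r43: "r^3 \<le> r^4" using r1 by (simp add: power_increasing)
    have mt: "m - t \<ge> m / 2" unfolding t_def r4[symmetric] using r43 by simp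
    have t0: "t > 0" unfolding t_def using r1 by simp
    have mt0: "m - t > 0" using mt mp by simp
    have up: "E \<le> g (m - t) + A / B * exp (l * (m - t)) * (p * exp (-l) + (1 - p)) ^ N"
    proof -
      have "E \<le> measure_pmf.expectation (binomial_pmf N p)
              (\<lambda>n. g (m - t) + A / B * exp (l * (m - t)) * exp (- l * real n))"
        unfolding E_def
      proof (rule integral_mono)
        show "integrable (measure_pmf (binomial_pmf N p)) (\<lambda>n. g (m - t) + A / B * exp (l * (m - t)) * exp (- l * real n))"
          using pI by simp
        show "integrable (measure_pmf (binomial_pmf N p)) (\<lambda>n. g (real n))"
          using pI by simp
        fix n :: nat
        show "g (real n) \<le> g (m - t) + A / B * exp (l * (m - t)) * exp (- l * real n)"
        proof (cases "real n \<ge> m - t")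
          case True
          have "g (real n) \<le> g (m - t)" unfolding g_def
            using g_mono[OF AB(1,2,3), of "m - t" "real n"] True mt0 by simp
          moreover have "0 \<le> A / B * exp (l * (m - t)) * exp (- l * real n)" using AB by simp
          ultimately show ?thesis by linarith
        next
          case False
          have "exp (l * (m - t)) * exp (- l * real n) = exp (l * (m - t) + - l * real n)"
            by (rule mult_exp_exp)
          also have "l * (m - t) + - l * real n = l * (m - t - real n)" by (simp add: algebra_simps)
          finally have ee: "exp (l * (m - t)) * exp (- l * real n) = exp (l * (m - t - real n))" .
          have d0: "0 \<le> m - t - real n" using False by simp
          have "0 \<le> l * (m - t - real n)" by (rule mult_nonneg_nonneg[OF l0 d0])
          hence e1: "1 \<le> exp (l * (m - t - real n))" by simp
          have AB0: "0 \<le> A / B" using AB by simp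
          have "A / B * 1 \<le> A / B * exp (l * (m - t - real n))" using e1 AB0 by (rule mult_left_mono)
          hence "A / B \<le> A / B * exp (l * (m - t)) * exp (- l * real n)"
            by (simp only: mult.assoc ee mult_1_right)
          moreover have "g (real n) \<le> A / B" "0 \<le> g (m - t)" unfolding g_def using g_le[OF AB(1,2)] by auto
          ultimately show ?thesis by linarith
        qed
      qed
      also have "\<dots> = g (m - t) + A / B * exp (l * (m - t)) *
          measure_pmf.expectation (binomial_pmf N p) (\<lambda>n. exp (- l * real n))"
        using pI by (simp add: Bochner_Integration.integral_add)
      also have "\<dots> = g (m - t) + A / B * exp (l * (m - t)) * (p * exp (-l) + (1 - p)) ^ N"
        using binomial_mgf[OF pI, of N l] by simp
      finally show ?thesis .
    qed
    have main: "g (m - t) - g m \<le> \<alpha> * A / m powr (\<alpha> + 1/4)"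
      unfolding g_def using main_est[OF AB r_def r4 r1 t_def] .
    have tail0: "exp (l * (m - t)) * (p * exp (-l) + (1 - p)) ^ N \<le> 320 / m^2"
      using tail_est[OF pI m_def r1 r4 mM'[unfolded M_def] t_def l_def] .
    have tail: "A / B * exp (l * (m - t)) * (p * exp (-l) + (1 - p)) ^ N \<le> 320 * A / B * (1 / m^2)"
    proof -
      have "A / B * exp (l * (m - t)) * (p * exp (-l) + (1 - p)) ^ N
          = A / B * (exp (l * (m - t)) * (p * exp (-l) + (1 - p)) ^ N)" by (rule mult.assoc)
      also have "\<dots> \<le> A / B * (320 / m^2)"
        using tail0 AB by (intro mult_left_mono) auto
      also have "A / B * (320 / m^2) = 320 * A / B * (1 / m^2)" by (simp add: field_simps)
      finally show ?thesis .
    qed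
    have third: "0 \<le> \<alpha> * A / m powr (\<alpha> + 1/2)" using AB by (intro divide_nonneg_nonneg) auto
    have qm: "real N * q k = m" unfolding m_def p_def ..
    have F': "approx_err A B \<alpha> N (q k) = g m" using Fdef unfolding p_def .
    have E': "exp_err A B \<alpha> N (q k) = E" using Edef unfolding p_def .
    have fin: "\<bar>g m - E\<bar> \<le> 320 * A / B * (1 / m ^ 2) + \<alpha> * A / m powr (\<alpha> + 1/4) + \<alpha> * A / m powr (\<alpha> + 1/2)"
      by (rule combine[OF low up main tail third])
    show "\<bar>approx_err A B \<alpha> N (q k) - exp_err A B \<alpha> N (q k)\<bar>
             \<le> 320 * A / B * (1 / (real N * q k) ^ 2)
               + \<alpha> * A / (real N * q k) powr (\<alpha> + 1/4)
               + \<alpha> * A / (real N * q k) powr (\<alpha> + 1/2)"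
      unfolding qm F' E' by (rule fin)
  qed
qed

end
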